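(* (a) For every single-qubit density matrix $\sigma$ there exist non-negative functions $w^0_\sigma,w^1_\sigma:\mathbb{Z}_2^2\to[0,\infty)$ with $\sum_{\mathbf{u}}(w^0_\sigma(\mathbf{u})+w^1_\sigma(\mathbf{u}))=1$ and $\sigma=\sum_{\mathbf{u}\in\mathbb{Z}_2^2}\big(w^0_\sigma(\mathbf{u})A^{0}(\mathbf{u})+w^1_\sigma(\mathbf{u})A^{a_xa_z}(\mathbf{u})\big)$, where $A^{a_xa_z}$ uses the single-qubit frame function $F(a_x,a_z)=a_xa_z$. (b) Consequently, every $n$-qubit product state $\rho=\bigotimes_{i=1}^n\rho_i$ has the non-negative representation $\rho=\sum_{\mathbf{b}\in\mathbb{Z}_2^n}\sum_{\mathbf{u}\in\mathbb{Z}_2^{2n}}W^{F_{\mathbf{b}}}(\mathbf{u})A^{F_{\mathbf{b}}}(\mathbf{u})$ over the set of frame functions $\mathcal{F}=\{F_{\mathbf{b}}:\mathbf{b}\in\mathbb{Z}_2^n\}$, $F_{\mathbf{b}}(\mathbf{a})=\sum_{i=1}^nb_ia_{ix}a_{iz}$, with product weights $W^{F_{\mathbf{b}}}(\mathbf{u})=\prod_{i=1}^nw^{b_i}_{\rho_i}(u_{ix},u_{iz})$.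
   Context: Let $n\ge 1$. Phase-space points are $\mathbf{u}=(\mathbf{u}_x,\mathbf{u}_z)=(u_{1x},\dots,u_{nx},u_{1z},\dots,u_{nz})\in\mathbb{Z}_2^{2n}$. For $\mathbf{a}\in\mathbb{Z}_2^{2n}$ let $T_{\mathbf{a}}=\bigotimes_{j=1}^n i^{a_{jx}a_{jz}}X^{a_{jx}}Z^{a_{jz}}$, where $X,Z$ are the single-qubit Pauli matrices. The symplectic product is $[\mathbf{u},\mathbf{a}]=\mathbf{u}_x\cdot\mathbf{a}_z+\mathbf{u}_z\cdot\mathbf{a}_x\pmod 2$. A frame function is any $F:\mathbb{Z}_2^{2n}\to\mathbb{Z}_2$ with $F(\mathbf{0})=0$. The phase point operator is $A^F(\mathbf{u})=2^{-n}\sum_{\mathbf{a}\in\mathbb{Z}_2^{2n}}(-1)^{[\mathbf{u},\mathbf{a}]+F(\mathbf{a})}T_{\mathbf{a}}$ (for $n=1$ this gives the single-qubit operators $A^0(\mathbf{u})$, $A^{a_xa_z}(\mathbf{u})$). A non-negative representation of $\rho$ over a finite set $\mathcal{F}$ of frame functions is a function $W:\mathcal{F}\times\mathbb{Z}_2^{2n}\to[0,\infty)$, $(F,\mathbf{u})\mapsto W^F(\mathbf{u})$, with $\sum_{F,\mathbf{u}}W^F(\mathbf{u})=1$ and $\rho=\sum_{F,\mathbf{u}}W^F(\mathbf{u})A^F(\mathbf{u})$. *)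

theory Defs
  imports Complex_Main
begin

text \<open>Computational basis of one qubit is indexed by bool (False = |0>, True = |1>).
  A single-qubit operator is a kernel bool => bool => complex (a 2x2 matrix).
  A bit string in Z_2^n is a function nat => bool vanishing from index n on;
  an n-qubit operator is a kernel on such bit strings (a 2^n x 2^n matrix).\<close>

type_synonym bits = "nat \<Rightarrow> bool"

definition Zn :: "nat \<Rightarrow> bits set" where
  "Zn n = {x. \<forall>i\<ge>n. \<not> x i}"

definition mmul1 :: "(bool \<Rightarrow> bool \<Rightarrow> complex) \<Rightarrow> (bool \<Rightarrow> bool \<Rightarrow> complex) \<Rightarrow> bool \<Rightarrow> bool \<Rightarrow> complex" where
  "mmul1 A B x y = (\<Sum>z\<in>UNIV. A x z * B z y)"

definition Id1 :: "bool \<Rightarrow> bool \<Rightarrow> complex" where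
  "Id1 x y = (if x = y then 1 else 0)"

definition PauliX :: "bool \<Rightarrow> bool \<Rightarrow> complex" where
  "PauliX x y = (if x \<noteq> y then 1 else 0)"

definition PauliZ :: "bool \<Rightarrow> bool \<Rightarrow> complex" where
  "PauliZ x y = (if x = y then (if x then -1 else 1) else 0)"

definition T1 :: "bool \<Rightarrow> bool \<Rightarrow> bool \<Rightarrow> bool \<Rightarrow> complex" where
  "T1 ax az = (\<lambda>x y. (if ax \<and> az then \<i> else 1) *
      mmul1 (if ax then PauliX else Id1) (if az then PauliZ else Id1) x y)"

definition Tn :: "nat \<Rightarrow> bits \<times> bits \<Rightarrow> bits \<Rightarrow> bits \<Rightarrow> complex" where
  "Tn n a x y = (\<Prod>j<n. T1 (fst a j) (snd a j) (x j) (y j))"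

definition symp :: "nat \<Rightarrow> bits \<times> bits \<Rightarrow> bits \<times> bits \<Rightarrow> nat" where
  "symp n u a = (\<Sum>j<n. of_bool (fst u j \<and> snd a j) + of_bool (snd u j \<and> fst a j)) mod 2"

text \<open>frame function on Z_2^{2n}: F(0) = 0 (Z_2 rendered as bool)\<close>
definition frame_function :: "(bits \<times> bits \<Rightarrow> bool) \<Rightarrow> bool" where
  "frame_function F \<longleftrightarrow> \<not> F (\<lambda>_. False, \<lambda>_. False)"

definition phase_point :: "nat \<Rightarrow> (bits \<times> bits \<Rightarrow> bool) \<Rightarrow> bits \<times> bits \<Rightarrow> bits \<Rightarrow> bits \<Rightarrow> complex" where
  "phase_point n F u x y = (1 / 2 ^ n) *
     (\<Sum>a\<in>Zn n \<times> Zn n. (-1) ^ (symp n u a + of_bool (F a)) * Tn n a x y)"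

definition phase_point1 :: "(bool \<times> bool \<Rightarrow> bool) \<Rightarrow> bool \<times> bool \<Rightarrow> bool \<Rightarrow> bool \<Rightarrow> complex" where
  "phase_point1 F u x y = (1 / 2) *
     (\<Sum>a\<in>UNIV. (-1) ^ ((of_bool (fst u \<and> snd a) + of_bool (snd u \<and> fst a)) + of_bool (F a))
                 * T1 (fst a) (snd a) x y)"

text \<open>A^0: frame function F = 0;  A^{a_x a_z}: frame function F(a_x,a_z) = a_x a_z\<close>
definition F0_1 :: "bool \<times> bool \<Rightarrow> bool" where "F0_1 a = False"
definition Fxz_1 :: "bool \<times> bool \<Rightarrow> bool" where "Fxz_1 a = (fst a \<and> snd a)"

definition density1 :: "(bool \<Rightarrow> bool \<Rightarrow> complex) \<Rightarrow> bool" where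
  "density1 \<sigma> \<longleftrightarrow>
     (\<forall>x y. \<sigma> x y = cnj (\<sigma> y x)) \<and>
     (\<forall>v :: bool \<Rightarrow> complex. 0 \<le> Re (\<Sum>x\<in>UNIV. \<Sum>y\<in>UNIV. cnj (v x) * \<sigma> x y * v y)) \<and>
     (\<Sum>x\<in>UNIV. \<sigma> x x) = 1"

text \<open>w^0, w^1 give a non-negative decomposition of sigma as in part (a);
  w b is w^b (b = False ~ 0, b = True ~ 1)\<close>
definition nonneg_decomp1 :: "(bool \<Rightarrow> bool \<Rightarrow> complex) \<Rightarrow> (bool \<Rightarrow> bool \<times> bool \<Rightarrow> real) \<Rightarrow> bool" where
  "nonneg_decomp1 \<sigma> w \<longleftrightarrow>
     (\<forall>b u. 0 \<le> w b u) \<and>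
     (\<Sum>u\<in>UNIV. w False u + w True u) = 1 \<and>
     (\<forall>x y. \<sigma> x y = (\<Sum>u\<in>UNIV. complex_of_real (w False u) * phase_point1 F0_1 u x y
                                   + complex_of_real (w True u) * phase_point1 Fxz_1 u x y))"

definition Fb :: "nat \<Rightarrow> bits \<Rightarrow> bits \<times> bits \<Rightarrow> bool" where
  "Fb n b a \<longleftrightarrow> odd (\<Sum>i<n. of_bool (b i \<and> fst a i \<and> snd a i) :: nat)"

definition product_state :: "nat \<Rightarrow> (nat \<Rightarrow> bool \<Rightarrow> bool \<Rightarrow> complex) \<Rightarrow> bits \<Rightarrow> bits \<Rightarrow> complex" where
  "product_state n \<rho> x y = (\<Prod>i<n. \<rho> i (x i) (y i))"

definition prod_weight :: "nat \<Rightarrow> (nat \<Rightarrow> bool \<Rightarrow> bool \<times> bool \<Rightarrow> real) \<Rightarrow> bits \<Rightarrow> bits \<times> bits \<Rightarrow> real" where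
  "prod_weight n w b u = (\<Prod>i<n. w i (b i) (fst u i, snd u i))"

end

theory Submission
  imports Defs
begin


definition ZnG :: "nat \<Rightarrow> 'b \<Rightarrow> (nat \<Rightarrow> 'b) set" where
  "ZnG n d = {x. \<forall>i\<ge>n. x i = d}"

lemma ZnG_Suc_img: "ZnG (Suc n) d = (\<lambda>(x,v). x(n:=v)) ` (ZnG n d \<times> UNIV)"
proof
  show "ZnG (Suc n) d \<subseteq> (\<lambda>(x,v). x(n:=v)) ` (ZnG n d \<times> UNIV)"
  proof
    fix x assume x: "x \<in> ZnG (Suc n) d"
    have "x = (\<lambda>(x,v). x(n:=v)) (x(n:=d), x n)" by auto
    moreover have "(x(n:=d), x n) \<in> ZnG n d \<times> UNIV" using x by (auto simp: ZnG_def)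
    ultimately show "x \<in> (\<lambda>(x,v). x(n:=v)) ` (ZnG n d \<times> UNIV)" by blast
  qed
qed (auto simp: ZnG_def)

lemma ZnG_inj: "inj_on (\<lambda>(x,v). x(n:=v)) (ZnG n d \<times> UNIV)"
proof (rule inj_onI, clarsimp)
  fix x v x' v' assume "x \<in> ZnG n d" "x' \<in> ZnG n d" and e: "x(n := v) = x'(n := v')"
  then have "v = v'" by (metis fun_upd_same)
  moreover have "x = x'"
  proof
    fix i show "x i = x' i" using e \<open>x \<in> ZnG n d\<close> \<open>x' \<in> ZnG n d\<close> unfolding ZnG_def
      by (cases "i = n") (auto dest: fun_cong[where x=i])
  qed
  ultimately show "x = x' \<and> v = v'" by simp
qed

lemma sum_times: "(\<Sum>u\<in>A\<times>B. f u) = (\<Sum>a\<in>A. \<Sum>b\<in>B. f (a,b))"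
  by (simp add: sum.cartesian_product)

lemma sum_ZnG_Suc: "(\<Sum>x\<in>ZnG (Suc n) d. f x) = (\<Sum>x\<in>ZnG n d. \<Sum>v\<in>UNIV. f (x(n:=v)))"
proof -
  have "(\<Sum>x\<in>ZnG (Suc n) d. f x) = (\<Sum>p\<in>ZnG n d \<times> UNIV. f ((\<lambda>(x,v). x(n:=v)) p))"
    unfolding ZnG_Suc_img by (rule sum.reindex[OF ZnG_inj, unfolded comp_def])
  also have "\<dots> = (\<Sum>x\<in>ZnG n d. \<Sum>v\<in>UNIV. f (x(n:=v)))"
    by (simp add: sum_times)
  finally show ?thesis .
qed

lemma prod_sumG:
  fixes g :: "nat \<Rightarrow> 'b::finite \<Rightarrow> 'a::comm_semiring_1"
  shows "(\<Sum>x\<in>ZnG n d. \<Prod>i<n. g i (x i)) = (\<Prod>i<n. \<Sum>v\<in>UNIV. g i v)"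
proof (induction n)
  case 0
  have "ZnG 0 d = {\<lambda>_. d}" by (auto simp: ZnG_def)
  then show ?case by simp
next
  case (Suc n)
  have "(\<Sum>x\<in>ZnG (Suc n) d. \<Prod>i<Suc n. g i (x i))
      = (\<Sum>x\<in>ZnG n d. \<Sum>v\<in>UNIV. (\<Prod>i<n. g i (x i)) * g n v)"
    by (simp add: sum_ZnG_Suc)
  also have "\<dots> = (\<Sum>x\<in>ZnG n d. \<Prod>i<n. g i (x i)) * (\<Sum>v\<in>UNIV. g n v)"
    by (subst sum_distrib_right) (simp add: sum_distrib_left)
  finally show ?case using Suc by simp
qed

lemma sum_UNIV_pair: "(\<Sum>u\<in>(UNIV::('c::finite\<times>'e::finite) set). f u) = (\<Sum>a\<in>UNIV. \<Sum>b\<in>UNIV. f (a,b))"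
  by (simp add: sum_times[symmetric] UNIV_Times_UNIV)

lemma prod_sum3:
  fixes g :: "nat \<Rightarrow> bool \<Rightarrow> bool \<Rightarrow> bool \<Rightarrow> 'a::comm_semiring_1"
  shows "(\<Sum>b\<in>Zn n. \<Sum>u\<in>Zn n \<times> Zn n. \<Prod>i<n. g i (b i) (fst u i) (snd u i))
       = (\<Prod>i<n. \<Sum>bv\<in>UNIV. \<Sum>xv\<in>UNIV. \<Sum>zv\<in>UNIV. g i bv xv zv)"
proof -
  have "(\<Sum>b\<in>Zn n. \<Sum>u\<in>Zn n \<times> Zn n. \<Prod>i<n. g i (b i) (fst u i) (snd u i))
     = (\<Sum>p\<in>Zn n \<times> (Zn n \<times> Zn n). \<Prod>i<n. g i (fst p i) (fst (snd p) i) (snd (snd p) i))"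
    by (simp add: sum_times)
  also have "\<dots> = (\<Sum>x\<in>ZnG n (False,False,False). \<Prod>i<n. g i (fst (x i)) (fst (snd (x i))) (snd (snd (x i))))"
    by (rule sum.reindex_bij_witness[where i="\<lambda>x. (\<lambda>i. fst (x i), \<lambda>i. fst (snd (x i)), \<lambda>i. snd (snd (x i)))"
          and j="\<lambda>p i. (fst p i, fst (snd p) i, snd (snd p) i)"])
       (auto simp: ZnG_def Zn_def)
  also have "\<dots> = (\<Prod>i<n. \<Sum>v\<in>UNIV. g i (fst v) (fst (snd v)) (snd (snd v)))"
    by (rule prod_sumG)
  also have "\<dots> = (\<Prod>i<n. \<Sum>bv\<in>UNIV. \<Sum>xv\<in>UNIV. \<Sum>zv\<in>UNIV. g i bv xv zv)"
    by (simp add: sum_UNIV_pair)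
  finally show ?thesis .
qed

lemma prod_sum2:
  fixes g :: "nat \<Rightarrow> bool \<Rightarrow> bool \<Rightarrow> 'a::comm_semiring_1"
  shows "(\<Sum>u\<in>Zn n \<times> Zn n. \<Prod>i<n. g i (fst u i) (snd u i))
       = (\<Prod>i<n. \<Sum>xv\<in>UNIV. \<Sum>zv\<in>UNIV. g i xv zv)"
proof -
  have "(\<Sum>u\<in>Zn n \<times> Zn n. \<Prod>i<n. g i (fst u i) (snd u i))
     = (\<Sum>x\<in>ZnG n (False,False). \<Prod>i<n. g i (fst (x i)) (snd (x i)))"
    by (rule sum.reindex_bij_witness[where i="\<lambda>x. (\<lambda>i. fst (x i), \<lambda>i. snd (x i))"
          and j="\<lambda>p i. (fst p i, snd p i)"])
       (auto simp: ZnG_def Zn_def)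
  also have "\<dots> = (\<Prod>i<n. \<Sum>v\<in>UNIV. g i (fst v) (snd v))"
    by (rule prod_sumG)
  also have "\<dots> = (\<Prod>i<n. \<Sum>xv\<in>UNIV. \<Sum>zv\<in>UNIV. g i xv zv)"
    by (simp add: sum_UNIV_pair)
  finally show ?thesis .
qed



definition sg :: "bool \<Rightarrow> real" where "sg b = (if b then -1 else 1)"

definition wq :: "(bool \<Rightarrow> bool \<Rightarrow> complex) \<Rightarrow> bool \<Rightarrow> bool \<times> bool \<Rightarrow> real" where
  "wq \<sigma> b u = (1 + sg (snd u) * (2 * Re (\<sigma> False True))) *
               (1 + sg ((fst u \<noteq> snd u) \<noteq> b) * (- 2 * Im (\<sigma> False True))) *
               (1 + sg (fst u) * (Re (\<sigma> False False) - Re (\<sigma> True True))) / 8"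

lemma pp1_vals:
  "phase_point1 F0_1 u x y = (1/2) * (\<Sum>a\<in>UNIV. (-1) ^ ((of_bool (fst u \<and> snd a) + of_bool (snd u \<and> fst a)))
                 * T1 (fst a) (snd a) x y)"
  "phase_point1 Fxz_1 u x y = (1/2) * (\<Sum>a\<in>UNIV. (-1) ^ ((of_bool (fst u \<and> snd a) + of_bool (snd u \<and> fst a)) + of_bool (fst a \<and> snd a))
                 * T1 (fst a) (snd a) x y)"
  by (simp_all add: phase_point1_def F0_1_def Fxz_1_def)

lemma T1_vals:
  "T1 False False x y = (if x = y then 1 else 0)"
  "T1 True False x y = (if x \<noteq> y then 1 else 0)"
  "T1 False True x y = (if x = y then (if x then -1 else 1) else 0)"
  "T1 True True x y = (if x \<noteq> y then (if y then -\<i> else \<i>) else 0)"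
  by (auto simp: T1_def mmul1_def PauliX_def PauliZ_def Id1_def UNIV_bool)

lemma single:
  assumes "density1 \<sigma>"
  shows "nonneg_decomp1 \<sigma> (wq \<sigma>)"
proof -
  from assms have herm: "\<And>x y. \<sigma> x y = cnj (\<sigma> y x)"
    and psd: "\<And>v. 0 \<le> Re (\<Sum>x\<in>UNIV. \<Sum>y\<in>UNIV. cnj (v x) * \<sigma> x y * v y)"
    and tr: "(\<Sum>x\<in>UNIV. \<sigma> x x) = 1" unfolding density1_def by blast+
  define a where "a = Re (\<sigma> False False)"
  define d where "d = Re (\<sigma> True True)"
  define cr where "cr = Re (\<sigma> False True)"
  define ci where "ci = Im (\<sigma> False True)"
  have ia: "Im (\<sigma> False False) = 0" using arg_cong[OF herm[of False False], of Im] by simp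
  have id: "Im (\<sigma> True True) = 0" using arg_cong[OF herm[of True True], of Im] by simp
  have sFF: "\<sigma> False False = a" using ia a_def by (simp add: complex_eq_iff)
  have sTT: "\<sigma> True True = d" using id d_def by (simp add: complex_eq_iff)
  have sFT: "\<sigma> False True = Complex cr ci" by (simp add: cr_def ci_def)
  have sTF: "\<sigma> True False = Complex cr (-ci)" using herm[of True False] sFT by (simp add: complex_eq_iff)
  have ad: "a + d = 1" using arg_cong[OF tr, of Re] by (simp add: UNIV_bool a_def d_def)
  have "0 \<le> Re (\<Sum>x\<in>UNIV. \<Sum>y\<in>UNIV. cnj ((\<lambda>x. if x then 0 else 1) x) * \<sigma> x y * (\<lambda>x. if x then 0 else 1) y)"
    by (rule psd)
  then have a0: "0 \<le> a" by (simp add: UNIV_bool sFF)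
  have "0 \<le> Re (\<Sum>x\<in>UNIV. \<Sum>y\<in>UNIV. cnj ((\<lambda>x. if x then 1 else 0) x) * \<sigma> x y * (\<lambda>x. if x then 1 else 0) y)"
    by (rule psd)
  then have d0: "0 \<le> d" by (simp add: UNIV_bool sTT)
  have "0 \<le> Re (\<Sum>x\<in>UNIV. \<Sum>y\<in>UNIV. cnj ((\<lambda>x. if x then 1 else 1) x) * \<sigma> x y * (\<lambda>x. if x then 1 else 1) y)"
    by (rule psd)
  then have x1: "0 \<le> a + d + 2 * cr" by (simp add: UNIV_bool sTT sFF sFT sTF)
  have "0 \<le> Re (\<Sum>x\<in>UNIV. \<Sum>y\<in>UNIV. cnj ((\<lambda>x. if x then -1 else 1) x) * \<sigma> x y * (\<lambda>x. if x then -1 else 1) y)"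
    by (rule psd)
  then have x2: "0 \<le> a + d - 2 * cr" by (simp add: UNIV_bool sTT sFF sFT sTF)
  have "0 \<le> Re (\<Sum>x\<in>UNIV. \<Sum>y\<in>UNIV. cnj ((\<lambda>x. if x then \<i> else 1) x) * \<sigma> x y * (\<lambda>x. if x then \<i> else 1) y)"
    by (rule psd)
  then have y1: "0 \<le> a + d - 2 * ci" by (simp add: UNIV_bool sTT sFF sFT sTF)
  have "0 \<le> Re (\<Sum>x\<in>UNIV. \<Sum>y\<in>UNIV. cnj ((\<lambda>x. if x then -\<i> else 1) x) * \<sigma> x y * (\<lambda>x. if x then -\<i> else 1) y)"
    by (rule psd)
  then have y2: "0 \<le> a + d + 2 * ci" by (simp add: UNIV_bool sTT sFF sFT sTF)
  have w: "wq \<sigma> b u = (1 + sg (snd u) * (2 * cr)) * (1 + sg ((fst u \<noteq> snd u) \<noteq> b) * (- 2 * ci)) *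
               (1 + sg (fst u) * (a - d)) / 8" for b u
    by (simp add: wq_def a_def d_def cr_def ci_def)
  have f1: "0 \<le> 1 + s * (2 * cr)" if "s = 1 \<or> s = -1" for s using that x1 x2 ad by auto
  have f2: "0 \<le> 1 + s * (- 2 * ci)" if "s = 1 \<or> s = -1" for s using that y1 y2 ad by auto
  have f3: "0 \<le> 1 + s * (a - d)" if "s = 1 \<or> s = -1" for s using that a0 d0 ad by auto
  have sg: "sg b = 1 \<or> sg b = -1" for b by (simp add: sg_def)
  have nn: "\<forall>b u. 0 \<le> wq \<sigma> b u"
    unfolding w by (intro allI divide_nonneg_pos mult_nonneg_nonneg f1 f2 f3 sg) auto
  have sm: "(\<Sum>u\<in>UNIV. wq \<sigma> False u + wq \<sigma> True u) = 1"
  proof -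
    have p: "wq \<sigma> False u + wq \<sigma> True u = (1 + sg (snd u) * (2 * cr)) * (1 + sg (fst u) * (a - d)) / 4" for u
      unfolding w by (cases "fst u \<noteq> snd u") (simp_all add: sg_def field_simps)
    show ?thesis unfolding p using ad by (simp add: sum_UNIV_pair UNIV_bool sg_def field_simps)
  qed
  have eq: "\<sigma> x y = (\<Sum>u\<in>UNIV. complex_of_real (wq \<sigma> False u) * phase_point1 F0_1 u x y
                                   + complex_of_real (wq \<sigma> True u) * phase_point1 Fxz_1 u x y)" for x y
    unfolding w pp1_vals
    apply (simp add: sum_UNIV_pair UNIV_bool T1_vals sg_def)
    apply (cases x; cases y)
       apply (simp_all add: sFF sTT sFT sTF complex_eq_iff algebra_simps)
    using ad by (simp_all add: field_simps)
  show ?thesis unfolding nonneg_decomp1_def using nn sm eq by blast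
qed



lemma m1_mod: "(-1::complex) ^ (k mod 2) = (-1) ^ k"
  by (simp add: minus_one_power_iff)

lemma m1_odd: "(-1::complex) ^ (of_bool (odd k)) = (-1) ^ k"
  by (simp add: minus_one_power_iff)

lemma sign_fact:
  "(-1::complex) ^ (symp n u a + of_bool (Fb n b a)) =
   (\<Prod>i<n. (-1) ^ ((of_bool (fst u i \<and> snd a i) + of_bool (snd u i \<and> fst a i))
                      + of_bool ((if b i then Fxz_1 else F0_1) (fst a i, snd a i))))"
proof -
  have "(-1::complex) ^ (symp n u a + of_bool (Fb n b a)) =
        (-1) ^ (\<Sum>j<n. of_bool (fst u j \<and> snd a j) + of_bool (snd u j \<and> fst a j)) *
        (-1) ^ (\<Sum>i<n. of_bool (b i \<and> fst a i \<and> snd a i) :: nat)"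
    unfolding symp_def Fb_def power_add m1_mod m1_odd ..
  also have "\<dots> = (\<Prod>i<n. (-1) ^ ((of_bool (fst u i \<and> snd a i) + of_bool (snd u i \<and> fst a i))
                      + of_bool ((if b i then Fxz_1 else F0_1) (fst a i, snd a i))))"
    unfolding power_sum prod.distrib[symmetric] power_add[symmetric]
    by (rule prod.cong) (auto simp: Fxz_1_def F0_1_def)
  finally show ?thesis .
qed

lemma pp_fact:
  "phase_point n (Fb n b) u x y =
   (\<Prod>i<n. phase_point1 (if b i then Fxz_1 else F0_1) (fst u i, snd u i) (x i) (y i))"
proof -
  define g where "g i ax az = (-1::complex) ^ ((of_bool (fst u i \<and> az) + of_bool (snd u i \<and> ax))
                      + of_bool ((if b i then Fxz_1 else F0_1) (ax, az))) * T1 ax az (x i) (y i)" for i ax az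
  have "phase_point n (Fb n b) u x y = (1 / 2 ^ n) * (\<Sum>a\<in>Zn n \<times> Zn n. \<Prod>i<n. g i (fst a i) (snd a i))"
    unfolding phase_point_def sign_fact Tn_def g_def by (simp add: prod.distrib)
  also have "\<dots> = (1 / 2 ^ n) * (\<Prod>i<n. \<Sum>ax\<in>UNIV. \<Sum>az\<in>UNIV. g i ax az)"
    by (simp add: prod_sum2)
  also have "\<dots> = (\<Prod>i<n. phase_point1 (if b i then Fxz_1 else F0_1) (fst u i, snd u i) (x i) (y i))"
    unfolding phase_point1_def g_def
    by (simp add: prod.distrib sum_UNIV_pair prod_dividef)
  finally show ?thesis .
qed



theorem mainTheorem8:
  shows "(\<forall>\<sigma>. density1 \<sigma> \<longrightarrow> (\<exists>w. nonneg_decomp1 \<sigma> w)) \<and>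
         (\<forall>n \<rho> w. n \<ge> 1 \<longrightarrow> (\<forall>i<n. density1 (\<rho> i)) \<longrightarrow> (\<forall>i<n. nonneg_decomp1 (\<rho> i) (w i)) \<longrightarrow>
           (\<forall>b\<in>Zn n. frame_function (Fb n b)) \<and>
           (\<forall>b\<in>Zn n. \<forall>u\<in>Zn n \<times> Zn n. 0 \<le> prod_weight n w b u) \<and>
           (\<Sum>b\<in>Zn n. \<Sum>u\<in>Zn n \<times> Zn n. prod_weight n w b u) = 1 \<and>
           (\<forall>x\<in>Zn n. \<forall>y\<in>Zn n. product_state n \<rho> x y =
              (\<Sum>b\<in>Zn n. \<Sum>u\<in>Zn n \<times> Zn n.
                 complex_of_real (prod_weight n w b u) * phase_point n (Fb n b) u x y)))"
proof (intro conjI allI impI ballI)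
  fix \<sigma> :: "bool \<Rightarrow> bool \<Rightarrow> complex" assume "density1 \<sigma>"
  then show "\<exists>w. nonneg_decomp1 \<sigma> w" using single by blast
next
  fix n b and w :: "nat \<Rightarrow> bool \<Rightarrow> bool \<times> bool \<Rightarrow> real"
  show "frame_function (Fb n b)" by (simp add: frame_function_def Fb_def)
next
  fix n \<rho> b u and w :: "nat \<Rightarrow> bool \<Rightarrow> bool \<times> bool \<Rightarrow> real"
  assume "\<forall>i<n. nonneg_decomp1 (\<rho> i) (w i)"
  then show "0 \<le> prod_weight n w b u"
    unfolding prod_weight_def nonneg_decomp1_def by (intro prod_nonneg) auto
next
  fix n \<rho> and w :: "nat \<Rightarrow> bool \<Rightarrow> bool \<times> bool \<Rightarrow> real"
  assume W: "\<forall>i<n. nonneg_decomp1 (\<rho> i) (w i)"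
  have "(\<Sum>b\<in>Zn n. \<Sum>u\<in>Zn n \<times> Zn n. prod_weight n w b u)
      = (\<Prod>i<n. \<Sum>bv\<in>UNIV. \<Sum>xv\<in>UNIV. \<Sum>zv\<in>UNIV. w i bv (xv, zv))"
    unfolding prod_weight_def by (rule prod_sum3)
  also have "\<dots> = (\<Prod>i<n. 1)"
  proof (rule prod.cong[OF refl])
    fix i assume "i \<in> {..<n}"
    then have "(\<Sum>u\<in>UNIV. w i False u + w i True u) = 1"
      using W unfolding nonneg_decomp1_def by auto
    then show "(\<Sum>bv\<in>UNIV. \<Sum>xv\<in>UNIV. \<Sum>zv\<in>UNIV. w i bv (xv, zv)) = 1"
      by (simp add: sum_UNIV_pair UNIV_bool algebra_simps)
  qed
  finally show "(\<Sum>b\<in>Zn n. \<Sum>u\<in>Zn n \<times> Zn n. prod_weight n w b u) = 1" by simp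
next
  fix n \<rho> x y and w :: "nat \<Rightarrow> bool \<Rightarrow> bool \<times> bool \<Rightarrow> real"
  assume W: "\<forall>i<n. nonneg_decomp1 (\<rho> i) (w i)"
  have "product_state n \<rho> x y = (\<Prod>i<n. \<Sum>bv\<in>UNIV. \<Sum>xv\<in>UNIV. \<Sum>zv\<in>UNIV.
      complex_of_real (w i bv (xv, zv)) * phase_point1 (if bv then Fxz_1 else F0_1) (xv, zv) (x i) (y i))"
    unfolding product_state_def
  proof (rule prod.cong[OF refl])
    fix i assume "i \<in> {..<n}"
    then have "\<rho> i (x i) (y i) = (\<Sum>u\<in>UNIV. complex_of_real (w i False u) * phase_point1 F0_1 u (x i) (y i)
                                   + complex_of_real (w i True u) * phase_point1 Fxz_1 u (x i) (y i))"
      using W unfolding nonneg_decomp1_def by auto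
    then show "\<rho> i (x i) (y i) = (\<Sum>bv\<in>UNIV. \<Sum>xv\<in>UNIV. \<Sum>zv\<in>UNIV.
      complex_of_real (w i bv (xv, zv)) * phase_point1 (if bv then Fxz_1 else F0_1) (xv, zv) (x i) (y i))"
      by (simp add: sum_UNIV_pair UNIV_bool algebra_simps)
  qed
  also have "\<dots> = (\<Sum>b\<in>Zn n. \<Sum>u\<in>Zn n \<times> Zn n. \<Prod>i<n.
      complex_of_real (w i (b i) (fst u i, snd u i)) * phase_point1 (if b i then Fxz_1 else F0_1) (fst u i, snd u i) (x i) (y i))"
    by (rule prod_sum3[symmetric])
  also have "\<dots> = (\<Sum>b\<in>Zn n. \<Sum>u\<in>Zn n \<times> Zn n.
                 complex_of_real (prod_weight n w b u) * phase_point n (Fb n b) u x y)"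
    by (simp add: prod.distrib pp_fact prod_weight_def)
  finally show "product_state n \<rho> x y = (\<Sum>b\<in>Zn n. \<Sum>u\<in>Zn n \<times> Zn n.
                 complex_of_real (prod_weight n w b u) * phase_point n (Fb n b) u x y)" .
qed

end
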